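(* Let $H=[H_1,\dots,H_N]'$ be a function $\mathbb{R}^m\to\mathbb{R}^N$ each of whose components is convex, and let $\mathcal{A}=\{1,\dots,N\}$. Assume there exist $u^*\in\mathbb{R}^m$ and a set $\mathcal{G}\subset\mathcal{A}$ with $|\mathcal{G}|\ge2$ such that (a) $H_i(u^* )=\max_{1\le j\le N}H_j(u^* )$ for all $i\in\mathcal{G}$; (b) for all $u\ne u^*$ there exists $i\in\mathcal{G}$ such that $H_i(u)>H_i(u^* )$; (c) $u^*$ is not a minimum of any $H_i$, $i\in\mathcal{G}$. Then there exists a non-pure vector $p^*\in\mathcal{S}_{N-1}$ with support $I(p^* )\subseteq\mathcal{G}$ such that \[ \inf_{u\in\mathbb{R}^m}\sup_{p\in\mathcal{S}_{N-1}}p'H(u)=(p^* )'H(u^* )=\sup_{p\in\mathcal{S}_{N-1}}\inf_{u\in\mathbb{R}^m}p'H(u). \]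
   Context: $\mathcal{S}_{N-1}=\{p\in\mathbb{R}^N:0\le p_j\le1,\sum_{j=1}^Np_j=1\}$ is the unit simplex. The support of $p$ is $I(p)=\{i:p_i>0\}$. A vector $p\in\mathcal{S}_{N-1}$ is non-pure if it is not a vertex of $\mathcal{S}_{N-1}$, i.e., it has at least two positive components. *)

theory Defs
  imports "HOL-Analysis.Analysis"
begin

definition unit_simplex :: "nat \<Rightarrow> (nat \<Rightarrow> real) set" where
  "unit_simplex N = {p. (\<forall>j\<in>{1..N}. 0 \<le> p j \<and> p j \<le> 1) \<and> (\<Sum>j\<in>{1..N}. p j) = 1
                   \<and> (\<forall>j. j \<notin> {1..N} \<longrightarrow> p j = 0)}"

definition supp_vec :: "nat \<Rightarrow> (nat \<Rightarrow> real) \<Rightarrow> nat set" where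
  "supp_vec N p = {i\<in>{1..N}. p i > 0}"

definition non_pure :: "nat \<Rightarrow> (nat \<Rightarrow> real) \<Rightarrow> bool" where
  "non_pure N p \<longleftrightarrow> card (supp_vec N p) \<ge> 2"

definition pH :: "nat \<Rightarrow> (nat \<Rightarrow> real) \<Rightarrow> (nat \<Rightarrow> 'a \<Rightarrow> real) \<Rightarrow> 'a \<Rightarrow> real" where
  "pH N p H u = (\<Sum>j\<in>{1..N}. p j * H j u)"

end

theory Submission imports Defs begin

lemma conv_sum:
  fixes f :: "nat \<Rightarrow> 'a::real_vector \<Rightarrow> real"
  assumes "finite J" "convex X" "\<forall>j\<in>J. convex_on X (f j) \<and> q j \<ge> 0"
  shows "convex_on X (\<lambda>u. \<Sum>j\<in>J. q j * f j u)"
  using assms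
proof (induction J rule: finite_induct)
  case empty
  then show ?case by (simp add: convex_on_const)
next
  case (insert x F)
  then show ?case by (simp add: convex_on_add convex_on_cmul)
qed

lemma arith_key:
  fixes a b c d :: real
  assumes "a > 0" "b \<ge> 0" "c \<ge> 0" "d > 0" "b * c < d * a"
  shows "\<exists>t. 0 \<le> t \<and> t \<le> 1 \<and> (1 - t) * c + t * (- a) < 0 \<and> (1 - t) * (- d) + t * b < 0"
proof -
  define t1 where "t1 = c / (a + c)"
  define t2 where "t2 = d / (b + d)"
  have e1: "t1 * (a + c) = c" using assms by (simp add: t1_def)
  have e2: "t2 * (b + d) = d" using assms by (simp add: t2_def)
  have "c * (b + d) < d * (a + c)" using assms by (simp add: algebra_simps)
  hence "t1 < t2" using assms unfolding t1_def t2_def by (simp add: divide_simps)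
  moreover have "t1 \<ge> 0" "t2 \<le> 1" using assms by (auto simp: t1_def t2_def divide_simps)
  ultimately have lt: "t1 < (t1+t2)/2" "(t1+t2)/2 < t2" "0 \<le> (t1+t2)/2" "(t1+t2)/2 \<le> 1" by auto
  define t where "t = (t1+t2)/2"
  have "t * (a + c) > c" using lt(1) e1 assms unfolding t_def
    by (metis add_pos_nonneg mult_strict_right_mono)
  moreover have "t * (b + d) < d" using lt(2) e2 assms unfolding t_def
    by (metis add_nonneg_pos mult_strict_right_mono)
  ultimately show ?thesis using lt unfolding t_def[symmetric]
    by (intro exI[of _ t]) (auto simp: algebra_simps)
qed

lemma two_fun:
  fixes f g :: "'a::real_vector \<Rightarrow> real"
  assumes cf: "convex_on X f" and cg: "convex_on X g"
    and h: "\<forall>u\<in>X. f u \<ge> 0 \<or> g u \<ge> 0"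
  shows "\<exists>l. 0 \<le> l \<and> l \<le> 1 \<and> (\<forall>u\<in>X. l * f u + (1 - l) * g u \<ge> 0)"
proof -
  have cX: "convex X" using cf convex_on_imp_convex by blast
  have key: "- g v / (f v - g v) \<le> g u / (g u - f u)"
    if u: "u \<in> X" "f u < 0" and v: "v \<in> X" "g v < 0" for u v
  proof (rule ccontr)
    assume "\<not> ?thesis"
    hence gt: "- g v / (f v - g v) > g u / (g u - f u)" by simp
    have gu: "g u \<ge> 0" using h u by auto
    have fv: "f v \<ge> 0" using h v by auto
    have "(- g v) * (g u - f u) > g u * (f v - g v)"
      using gt gu fv u v by (simp add: divide_simps split: if_splits)
    hence "g u * f v < (- g v) * (- f u)" by (simp add: algebra_simps)
    then obtain t where t: "0 \<le> t" "t \<le> 1" "(1 - t) * f v + t * (- (- f u)) < 0"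
        "(1 - t) * (- (- g v)) + t * g u < 0"
      using arith_key[of "- f u" "g u" "f v" "- g v"] gu fv u v by auto
    define w where "w = (1 - t) *\<^sub>R v + t *\<^sub>R u"
    have wX: "w \<in> X" using cX u v t unfolding w_def convex_alt
      by (metis add.commute diff_add_cancel diff_ge_0_iff_ge convex_def)
    have "f w \<le> (1 - t) * f v + t * f u" using convex_onD[OF cf t(1,2) v(1) u(1)] w_def by simp
    moreover have "g w \<le> (1 - t) * g v + t * g u" using convex_onD[OF cg t(1,2) v(1) u(1)] w_def by simp
    ultimately show False using h wX t by force
  qed
  define L where "L = insert 0 ((\<lambda>v. - g v / (f v - g v)) ` {v\<in>X. g v < 0})"
  have Lle1: "\<forall>x\<in>L. x \<le> 1"
  proof
    fix x assume "x \<in> L"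
    then show "x \<le> 1" unfolding L_def
    proof
      assume "x \<in> (\<lambda>v. - g v / (f v - g v)) ` {v\<in>X. g v < 0}"
      then obtain v where v: "v \<in> X" "g v < 0" "x = - g v / (f v - g v)" by auto
      have "f v \<ge> 0" using h v by auto
      then have "f v - g v > 0" "- g v \<le> 1 * (f v - g v)" using v by auto
      then show "x \<le> 1" using v(3) by (simp only: divide_le_eq) simp
    qed simp
  qed
  have bdd: "bdd_above L" using Lle1 by (auto simp: bdd_above_def)
  define l where "l = Sup L"
  have l0: "0 \<le> l" unfolding l_def using bdd by (intro cSup_upper) (auto simp: L_def)
  have l1: "l \<le> 1" unfolding l_def using Lle1 by (intro cSup_least) (auto simp: L_def)
  have lo: "- g v / (f v - g v) \<le> l" if "v \<in> X" "g v < 0" for v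
    unfolding l_def using bdd that by (intro cSup_upper) (auto simp: L_def)
  have up: "l \<le> g u / (g u - f u)" if u: "u \<in> X" "f u < 0" for u
  proof -
    have "g u \<ge> 0" using h u by auto
    then have "0 \<le> g u / (g u - f u)" using u by simp
    then show ?thesis unfolding l_def L_def using key[OF u]
      by (intro cSup_least) auto
  qed
  have "\<forall>u\<in>X. l * f u + (1 - l) * g u \<ge> 0"
  proof
    fix u assume uX: "u \<in> X"
    consider "f u < 0" | "g u < 0" | "f u \<ge> 0" "g u \<ge> 0" by linarith
    then show "l * f u + (1 - l) * g u \<ge> 0"
    proof cases
      case 1
      have gu: "g u \<ge> 0" using h uX 1 by auto
      have "l * (g u - f u) \<le> g u" using up[OF uX 1] 1 gu by (simp add: divide_simps)
      then show ?thesis by (simp add: algebra_simps)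
    next
      case 2
      have fu: "f u \<ge> 0" using h uX 2 by auto
      have "- g u \<le> l * (f u - g u)" using lo[OF uX 2] 2 fu by (simp add: divide_simps)
      then show ?thesis by (simp add: algebra_simps)
    next
      case 3
      then show ?thesis using l0 l1 by simp
    qed
  qed
  then show ?thesis using l0 l1 by blast
qed

lemma key_lemma:
  fixes f :: "nat \<Rightarrow> 'a::real_vector \<Rightarrow> real"
  assumes "finite I" "I \<noteq> {}"
  shows "convex X \<Longrightarrow> (\<forall>i\<in>I. convex_on X (f i)) \<Longrightarrow> (\<forall>u\<in>X. \<exists>i\<in>I. f i u \<ge> 0) \<Longrightarrow>
    \<exists>p. (\<forall>i\<in>I. p i \<ge> 0) \<and> sum p I = 1 \<and> (\<forall>u\<in>X. (\<Sum>i\<in>I. p i * f i u) \<ge> 0)"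
  using assms
proof (induction I arbitrary: X rule: finite_ne_induct)
  case (singleton x)
  then show ?case by (intro exI[of _ "\<lambda>_. 1"]) auto
next
  case (insert k J)
  define X' where "X' = {u\<in>X. f k u < 0}"
  have ck: "convex_on X (f k)" using insert by auto
  have cX': "convex X'" unfolding X'_def convex_def
  proof (intro ballI allI impI)
    fix x y :: 'a and u v :: real
    assume xy: "x \<in> {u \<in> X. f k u < 0}" "y \<in> {u \<in> X. f k u < 0}" and uv: "0 \<le> u" "0 \<le> v" "u + v = 1"
    have m: "u *\<^sub>R x + v *\<^sub>R y \<in> X" using insert.prems(1) xy uv unfolding convex_def by auto
    have "f k (u *\<^sub>R x + v *\<^sub>R y) \<le> u * f k x + v * f k y"
      using ck xy uv unfolding convex_on_def by auto
    also have "\<dots> < 0"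
    proof (cases "u = 0")
      case True then show ?thesis using uv xy by auto
    next
      case False
      then have "u * f k x < 0" using uv xy by (simp add: mult_pos_neg)
      moreover have "v * f k y \<le> 0" using uv xy by (simp add: mult_nonneg_nonpos)
      ultimately show ?thesis by linarith
    qed
    finally show "u *\<^sub>R x + v *\<^sub>R y \<in> {u \<in> X. f k u < 0}" using m by auto
  qed
  have "\<exists>q. (\<forall>i\<in>J. q i \<ge> 0) \<and> sum q J = 1 \<and> (\<forall>u\<in>X'. (\<Sum>i\<in>J. q i * f i u) \<ge> 0)"
  proof (rule insert.IH[OF cX'])
    show "\<forall>i\<in>J. convex_on X' (f i)" using insert.prems cX' unfolding X'_def
      by (auto intro: convex_on_subset)
    show "\<forall>u\<in>X'. \<exists>i\<in>J. 0 \<le> f i u" using insert.prems(3) unfolding X'_def by force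
  qed
  then obtain q where q: "\<forall>i\<in>J. q i \<ge> 0" "sum q J = 1" "\<forall>u\<in>X'. (\<Sum>i\<in>J. q i * f i u) \<ge> 0"
    by blast
  define g where "g u = (\<Sum>i\<in>J. q i * f i u)" for u
  have cg: "convex_on X g" unfolding g_def using insert q
    by (intro conv_sum) auto
  have "\<forall>u\<in>X. f k u \<ge> 0 \<or> g u \<ge> 0" using q(3) unfolding X'_def g_def by force
  then obtain l where l: "0 \<le> l" "l \<le> 1" "\<forall>u\<in>X. l * f k u + (1 - l) * g u \<ge> 0"
    using two_fun[OF ck cg] by blast
  define p where "p i = (if i = k then l else (1 - l) * q i)" for i
  have s1: "sum p J = (1 - l) * sum q J" using \<open>k \<notin> J\<close>
    unfolding p_def sum_distrib_left by (intro sum.cong) auto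
  have s2: "(\<Sum>i\<in>J. p i * f i u) = (1 - l) * g u" for u using \<open>k \<notin> J\<close>
    unfolding p_def g_def sum_distrib_left by (intro sum.cong) auto
  show ?case
  proof (intro exI[of _ p] conjI ballI)
    fix i assume "i \<in> insert k J" then show "0 \<le> p i" using q l by (auto simp: p_def)
  next
    show "sum p (insert k J) = 1" using insert s1 q by (simp add: p_def)
  next
    fix u assume "u \<in> X"
    then show "0 \<le> (\<Sum>i\<in>insert k J. p i * f i u)" using insert s2 l by (simp add: p_def)
  qed
qed

theorem lemma1:
  fixes N :: nat and H :: "nat \<Rightarrow> real^'m \<Rightarrow> real"
    and ustar :: "real^'m" and G :: "nat set"
  assumes conv: "\<And>i. i \<in> {1..N} \<Longrightarrow> convex_on UNIV (H i)"
    and G_sub: "G \<subseteq> {1..N}" and G_card: "card G \<ge> 2"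
    and a: "\<And>i. i \<in> G \<Longrightarrow> H i ustar = Max {H j ustar | j. j \<in> {1..N}}"
    and b: "\<And>u. u \<noteq> ustar \<Longrightarrow> \<exists>i\<in>G. H i u > H i ustar"
    and c: "\<And>i. i \<in> G \<Longrightarrow> \<not> (\<forall>u. H i ustar \<le> H i u)"
  shows "\<exists>pstar \<in> unit_simplex N. non_pure N pstar \<and> supp_vec N pstar \<subseteq> G \<and>
     (INF u. SUP p\<in>unit_simplex N. ereal (pH N p H u)) = ereal (pH N pstar H ustar) \<and>
     ereal (pH N pstar H ustar) = (SUP p\<in>unit_simplex N. INF u. ereal (pH N p H u))"
proof -
  define M where "M = Max {H j ustar | j. j \<in> {1..N}}"
  have setfin: "finite {H j ustar | j. j \<in> {1..N}}" by simp
  have leM: "H j ustar \<le> M" if "j \<in> {1..N}" for j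
    unfolding M_def using that by (intro Max_ge[OF setfin]) auto
  have aM: "H i ustar = M" if "i \<in> G" for i using a[OF that] M_def by simp
  have finG: "finite G" using G_sub finite_subset by blast
  have neG: "G \<noteq> {}" using G_card by auto
  have "\<exists>p. (\<forall>i\<in>G. p i \<ge> 0) \<and> sum p G = 1 \<and> (\<forall>u\<in>UNIV. (\<Sum>i\<in>G. p i * (H i u - M)) \<ge> 0)"
  proof (rule key_lemma[OF finG neG])
    show "convex (UNIV :: (real^'m) set)" by simp
    show "\<forall>i\<in>G. convex_on UNIV (\<lambda>u. H i u - M)" using conv G_sub
      by (auto intro!: convex_on_add[of _ _ "\<lambda>_. - M", simplified] simp: convex_on_const)
    show "\<forall>u\<in>UNIV. \<exists>i\<in>G. 0 \<le> H i u - M"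
    proof
      fix u :: "real^'m"
      show "\<exists>i\<in>G. 0 \<le> H i u - M"
      proof (cases "u = ustar")
        case True then show ?thesis using neG aM by auto
      next
        case False then show ?thesis using b[OF False] aM by force
      qed
    qed
  qed
  then obtain p where p0: "\<forall>i\<in>G. p i \<ge> 0" and p1: "sum p G = 1"
    and pH0: "\<And>u. (\<Sum>i\<in>G. p i * (H i u - M)) \<ge> 0" by blast
  have pG: "(\<Sum>i\<in>G. p i * H i u) = (\<Sum>i\<in>G. p i * (H i u - M)) + M" for u
    using p1 by (simp add: algebra_simps sum.distrib sum_subtractf sum_distrib_left[symmetric])
  define ps where "ps i = (if i \<in> G then p i else 0)" for i
  have sumN: "(\<Sum>j\<in>{1..N}. ps j * h j) = (\<Sum>j\<in>G. p j * h j)" for h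
  proof -
    have "(\<Sum>j\<in>{1..N}. ps j * h j) = (\<Sum>j\<in>{1..N}. if j \<in> G then p j * h j else 0)"
      unfolding ps_def by (intro sum.cong) auto
    also have "\<dots> = (\<Sum>j\<in>{1..N} \<inter> G. p j * h j)" by (simp add: sum.inter_restrict)
    also have "{1..N} \<inter> G = G" using G_sub by auto
    finally show ?thesis .
  qed
  have pHps: "pH N ps H u = (\<Sum>j\<in>G. p j * H j u)" for u unfolding pH_def by (rule sumN)
  have geM: "pH N ps H u \<ge> M" for u using pHps pG pH0 by simp
  have atM: "pH N ps H ustar = M"
  proof -
    have "(\<Sum>j\<in>G. p j * H j ustar) = (\<Sum>j\<in>G. p j * M)" using aM by (intro sum.cong) auto
    then show ?thesis using pHps p1 by (simp add: sum_distrib_right[symmetric])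
  qed
  have ple1: "p i \<le> 1" if "i \<in> G" for i
    using p1 member_le_sum[of i G p] p0 finG that by auto
  have psS: "ps \<in> unit_simplex N"
  proof -
    have "(\<Sum>j\<in>{1..N}. ps j) = 1" using sumN[of "\<lambda>_. 1"] p1 by simp
    then show ?thesis unfolding unit_simplex_def using p0 ple1 G_sub by (auto simp: ps_def)
  qed
  have suppeq: "supp_vec N ps = {i\<in>G. p i > 0}" unfolding supp_vec_def ps_def using G_sub by auto
  have supp_sub: "supp_vec N ps \<subseteq> G" using suppeq by auto
  have np: "non_pure N ps"
  proof (rule ccontr)
    assume "\<not> non_pure N ps"
    then have cs: "card {i\<in>G. p i > 0} < 2" unfolding non_pure_def suppeq by simp
    have fs: "finite {i\<in>G. p i > 0}" using finG by simp
    have zero_out: "p j = 0" if "j \<in> G" "j \<notin> {i\<in>G. p i > 0}" for j using that p0 by force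
    show False
    proof (cases "card {i\<in>G. p i > 0} = 0")
      case True
      then have "{i\<in>G. p i > 0} = {}" using fs by simp
      then have "sum p G = 0" using zero_out by (intro sum.neutral) auto
      then show False using p1 by simp
    next
      case False
      then have "card {i\<in>G. p i > 0} = 1" using cs by simp
      then obtain i where i: "{i\<in>G. p i > 0} = {i}" by (meson card_1_singletonE)
      then have iG: "i \<in> G" by auto
      have oth: "p j = 0" if "j \<in> G" "j \<noteq> i" for j using zero_out[of j] that i by auto
      have "sum p G = p i" using finG iG oth
        by (subst sum.remove[of G i]) (auto intro!: sum.neutral)
      then have pi1: "p i = 1" using p1 by simp
      have "H i ustar \<le> H i u" for u
      proof -
        have "(\<Sum>j\<in>G. p j * (H j u - M)) = p i * (H i u - M)" using finG iG oth
          by (subst sum.remove[of G i]) (auto intro!: sum.neutral)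
        then have "H i u - M \<ge> 0" using pH0[of u] pi1 by simp
        then show ?thesis using aM[OF iG] by simp
      qed
      then show False using c[OF iG] by blast
    qed
  qed
  have leM2: "pH N q H ustar \<le> M" if "q \<in> unit_simplex N" for q
  proof -
    have q0: "\<forall>j\<in>{1..N}. q j \<ge> 0" and q1: "(\<Sum>j\<in>{1..N}. q j) = 1"
      using that unfolding unit_simplex_def by auto
    have "pH N q H ustar \<le> (\<Sum>j\<in>{1..N}. q j * M)" unfolding pH_def
      using q0 leM by (intro sum_mono mult_left_mono) auto
    also have "\<dots> = M" using q1 by (simp add: sum_distrib_right[symmetric])
    finally show ?thesis .
  qed
  have I1: "(INF u. SUP q\<in>unit_simplex N. ereal (pH N q H u)) = ereal M"
  proof (rule antisym)
    have "(INF u. SUP q\<in>unit_simplex N. ereal (pH N q H u)) \<le> (SUP q\<in>unit_simplex N. ereal (pH N q H ustar))"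
      by (rule INF_lower) simp
    also have "\<dots> \<le> ereal M" using leM2 by (intro SUP_least) simp
    finally show "(INF u. SUP q\<in>unit_simplex N. ereal (pH N q H u)) \<le> ereal M" .
  next
    show "ereal M \<le> (INF u. SUP q\<in>unit_simplex N. ereal (pH N q H u))"
      using psS geM by (intro INF_greatest SUP_upper2[of ps]) auto
  qed
  have I2: "(SUP q\<in>unit_simplex N. INF u. ereal (pH N q H u)) = ereal M"
  proof (rule antisym)
    show "(SUP q\<in>unit_simplex N. INF u. ereal (pH N q H u)) \<le> ereal M"
      using leM2 by (intro SUP_least INF_lower2[of ustar]) auto
  next
    show "ereal M \<le> (SUP q\<in>unit_simplex N. INF u. ereal (pH N q H u))"
      using psS geM by (intro SUP_upper2[of ps] INF_greatest) auto
  qed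
  show ?thesis using psS np supp_sub I1 I2 atM by (intro bexI[of _ ps]) auto
qed

end
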